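(* Let $q\ge 2$ be an even integer, $m\ge 4$ an integer, $\pi$ a permutation of $\{0,1,\dots,m-3\}$, and $c\in\mathbb Z_q$. For $d\in\{0,1\}$ define the Boolean functions $\zeta^d,\eta^d$ in the variables $x_0,\dots,x_{m-3}$ (values in $\mathbb Z_2$) by $$\zeta^d=\sum_{\alpha=0}^{m-4}x_{\pi(\alpha)}x_{\pi(\alpha+1)}+d\,x_{\pi(m-3)},\qquad \eta^d=\sum_{\alpha=0}^{m-4}\bar x_{\pi(\alpha)}\bar x_{\pi(\alpha+1)}+\bar d\,\bar x_{\pi(m-3)}+d,$$ and the generalized Boolean function $g^d:\mathbb Z_2^m\to\mathbb Z_q$ by $$g^d=\frac q2\Big[\bar x_{m-1}x_{m-2}\,\zeta^d+x_{m-1}\bar x_{m-2}\,\eta^d+\bar d\,x_{m-1}x_{m-2}\Big]+c .$$ Then $(\mathbf a,\mathbf b)=\big(\Psi_{2^{m-2}-1}(g^0),\Psi_{2^{m-2}-1}(g^1)\big)$ is a $(2^{m-1}+2,\;2^{\pi(m-3)}+1)$-CZCP.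
   Context: $\omega=e^{2\pi\sqrt{-1}/q}$. For $x\in\{0,1\}$, $\bar x=1-x$. For an integer $0\le i<2^m$, $\mathbf r_i=(r_{i,0},\dots,r_{i,m-1})$ is its binary representation, $i=\sum_j r_{i,j}2^j$. For a function $f:\mathbb Z_2^m\to\mathbb Z_q$, $\Psi(f)$ is the length-$2^m$ complex sequence $(\omega^{f(\mathbf r_0)},\omega^{f(\mathbf r_1)},\dots,\omega^{f(\mathbf r_{2^m-1})})$, and for $0\le L<2^{m-1}$ the truncated sequence $\Psi_L(f)$ is obtained from $\Psi(f)$ by deleting its first $L$ and its last $L$ entries (so it has length $2^m-2L$). Aperiodic correlation: for complex sequences $\mathbf a,\mathbf b$ of length $N$, $\rho_{\mathbf a,\mathbf b}(\tau)=\sum_{k=0}^{N-1-\tau}a_k\overline{b_{k+\tau}}$ for $0\le\tau\le N-1$, $\rho_{\mathbf a,\mathbf b}(\tau)=\sum_{k=0}^{N-1+\tau}a_{k-\tau}\overline{b_k}$ for $-(N-1)\le\tau\le -1$, and $0$ for $|\tau|\ge N$; $\rho_{\mathbf a}=\rho_{\mathbf a,\mathbf a}$. CZCP: for positive integers $N,Z$ let $\mathcal T_1=\{1,\dots,Z\}$ and $\mathcal T_2=\{N-Z,\dots,N-1\}$. A pair $(\mathbf a,\mathbf b)$ of length-$N$ sequences is an $(N,Z)$-CZCP (cross Z-complementary pair) if (C1) $\rho_{\mathbf a}(\tau)+\rho_{\mathbf b}(\tau)=0$ for all $\tau$ with $|\tau|\in\mathcal T_1\cup\mathcal T_2$, and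 (C2) $\rho_{\mathbf a,\mathbf b}(\tau)+\rho_{\mathbf b,\mathbf a}(\tau)=0$ for all $\tau$ with $|\tau|\in\mathcal T_2$. *)

theory Defs
  imports "HOL-Analysis.Analysis" "HOL-Combinatorics.Permutations"
begin

definition omega :: "nat \<Rightarrow> complex" where
  "omega q = exp (2 * pi * \<i> / of_nat q)"

definition bit_of :: "nat \<Rightarrow> nat \<Rightarrow> int" where
  "bit_of i j = int ((i div 2 ^ j) mod 2)"

text \<open>Psi(f): length 2^m sequence; f is a generalized Boolean function given on
  binary vectors (as functions nat => int, entries 0/1), values in Z (read mod q).\<close>
definition Psi :: "nat \<Rightarrow> nat \<Rightarrow> ((nat \<Rightarrow> int) \<Rightarrow> int) \<Rightarrow> nat \<Rightarrow> complex" where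
  "Psi q m f k = (if k < 2 ^ m then omega q powi (f (bit_of k) mod int q) else 0)"

definition PsiL :: "nat \<Rightarrow> nat \<Rightarrow> nat \<Rightarrow> ((nat \<Rightarrow> int) \<Rightarrow> int) \<Rightarrow> nat \<Rightarrow> complex" where
  "PsiL q m L f k = (if k < 2 ^ m - 2 * L then Psi q m f (k + L) else 0)"

definition acorr :: "nat \<Rightarrow> (nat \<Rightarrow> complex) \<Rightarrow> (nat \<Rightarrow> complex) \<Rightarrow> int \<Rightarrow> complex" where
  "acorr N a b \<tau> =
     (if \<bar>\<tau>\<bar> \<ge> int N then 0
      else if \<tau> \<ge> 0 then (\<Sum>k = 0..<N - nat \<tau>. a k * cnj (b (k + nat \<tau>)))
      else (\<Sum>k = 0..<N - nat (-\<tau>). a (k + nat (-\<tau>)) * cnj (b k)))"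

definition CZCP :: "nat \<Rightarrow> nat \<Rightarrow> (nat \<Rightarrow> complex) \<Rightarrow> (nat \<Rightarrow> complex) \<Rightarrow> bool" where
  "CZCP N Z a b \<longleftrightarrow>
     (\<forall>\<tau>::int. (nat \<bar>\<tau>\<bar> \<in> {1..Z} \<union> {N - Z..N - 1}) \<longrightarrow>
        acorr N a a \<tau> + acorr N b b \<tau> = 0) \<and>
     (\<forall>\<tau>::int. (nat \<bar>\<tau>\<bar> \<in> {N - Z..N - 1}) \<longrightarrow>
        acorr N a b \<tau> + acorr N b a \<tau> = 0)"

definition zeta :: "nat \<Rightarrow> (nat \<Rightarrow> nat) \<Rightarrow> int \<Rightarrow> (nat \<Rightarrow> int) \<Rightarrow> int" where
  "zeta m \<pi> d x = ((\<Sum>\<alpha> = 0..m - 4. x (\<pi> \<alpha>) * x (\<pi> (\<alpha> + 1))) + d * x (\<pi> (m - 3))) mod 2"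

definition eta :: "nat \<Rightarrow> (nat \<Rightarrow> nat) \<Rightarrow> int \<Rightarrow> (nat \<Rightarrow> int) \<Rightarrow> int" where
  "eta m \<pi> d x = ((\<Sum>\<alpha> = 0..m - 4. (1 - x (\<pi> \<alpha>)) * (1 - x (\<pi> (\<alpha> + 1))))
                   + (1 - d) * (1 - x (\<pi> (m - 3))) + d) mod 2"

definition gfun :: "nat \<Rightarrow> nat \<Rightarrow> (nat \<Rightarrow> nat) \<Rightarrow> int \<Rightarrow> int \<Rightarrow> (nat \<Rightarrow> int) \<Rightarrow> int" where
  "gfun q m \<pi> c d x =
     int (q div 2) *
       (((1 - x (m - 1)) * x (m - 2) * zeta m \<pi> d x
         + x (m - 1) * (1 - x (m - 2)) * eta m \<pi> d x
         + (1 - d) * x (m - 1) * x (m - 2)) mod 2) + c"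

end

theory Submission
  imports Defs
begin


definition par :: "int \<Rightarrow> int" where "par z = (if even z then 1 else -1)"

lemma par_add: "par (a + b) = par a * par b"
  by (auto simp: par_def)

lemma par_sq: "par a * par a = 1" by (auto simp: par_def)

lemma par_mod2: "par (a mod 2) = par a" by (auto simp: par_def)

lemma par_1: "par 1 = -1" and par_0: "par 0 = 1" by (auto simp: par_def)

definition fz :: "nat \<Rightarrow> (nat \<Rightarrow> nat) \<Rightarrow> (nat \<Rightarrow> int) \<Rightarrow> int" where
  "fz n \<pi> x = (\<Sum>\<alpha> = 0..n - 2. x (\<pi> \<alpha>) * x (\<pi> (\<alpha> + 1)))"

definition bv :: "nat \<Rightarrow> nat \<Rightarrow> int" where "bv i j = (if bit i j then 1 else 0)"

lemma bv_flip: "bv (flip_bit p i) = (bv i)(p := 1 - bv i p)"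
  by (rule ext) (auto simp: bv_def bit_flip_bit_iff)

lemma bit_ge: "bit (i::nat) p \<Longrightarrow> 2 ^ p \<le> i"
proof -
  assume "bit i p"
  then have "odd (i div 2 ^ p)" by (simp add: bit_iff_odd)
  then have "i div 2 ^ p \<ge> 1" by (cases "i div 2 ^ p") auto
  then show ?thesis
    by (metis div_greater_zero_iff gr_zeroI less_one not_less zero_less_numeral zero_less_power)
qed

lemma bit_lt: "(i::nat) < 2 ^ n \<Longrightarrow> bit i j \<Longrightarrow> j < n"
  by (metis bit_take_bit_iff take_bit_nat_eq_self)

lemma flip_lt: "(j::nat) < 2 ^ n \<Longrightarrow> p < n \<Longrightarrow> flip_bit p j < 2 ^ n"
proof -
  assume a: "j < 2 ^ n" "p < n"
  have "take_bit n (flip_bit p j) = flip_bit p (take_bit n j)" using a by (simp add: take_bit_flip_bit_eq)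
  also have "take_bit n j = j" using a by (simp add: take_bit_nat_eq_self)
  finally have "flip_bit p j = take_bit n (flip_bit p j)" by simp
  then show ?thesis by (metis take_bit_nat_less_exp)
qed

lemma flip_add:
  assumes "bit (i::nat) p = bit (i + t) p"
  shows "flip_bit p i + t = flip_bit p (i + t)"
proof (cases "bit i p")
  case True
  have u: "unset_bit p a + 2 ^ p = a" if "bit (a::nat) p" for a
  proof -
    have "set_bit p (unset_bit p a) = a" using that
      by (intro bit_eqI) (auto simp: bit_set_bit_iff bit_unset_bit_iff)
    moreover have "\<not> bit (unset_bit p a) p" by (simp add: bit_unset_bit_iff)
    ultimately show ?thesis by (metis set_bit_eq of_bool_eq(2) mult_1)
  qed
  have "unset_bit p i + t + 2 ^ p = unset_bit p (i + t) + 2 ^ p"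
    using u[of i] u[of "i+t"] True assms by simp
  then show ?thesis using True assms by (simp add: flip_bit_eq_if)
next
  case False
  then show ?thesis using assms by (simp add: flip_bit_eq_if set_bit_eq)
qed

lemma fz_flip:
  assumes perm: "\<pi> permutes {0..n-1}" and h: "h + 1 \<le> n - 1" and p: "p = \<pi> (h+1)"
  shows "fz n \<pi> (x(p := 1 - x p)) = fz n \<pi> x + x (\<pi> h) * (1 - 2 * x p)
      + (if h + 1 \<le> n - 2 then (1 - 2 * x p) * x (\<pi> (h+2)) else 0)"
proof -
  have inj: "\<pi> a = \<pi> b \<longleftrightarrow> a = b" for a b using permutes_inj[OF perm] by (auto dest: injD)
  let ?x' = "x(p := 1 - x p)"
  have pt: "?x' (\<pi> \<alpha>) * ?x' (\<pi> (\<alpha> + 1)) = x (\<pi> \<alpha>) * x (\<pi> (\<alpha>+1))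
     + (if \<alpha> = h then x (\<pi> h) * (1 - 2 * x p) else 0)
     + (if \<alpha> = h + 1 then (1 - 2 * x p) * x (\<pi> (h+2)) else 0)" for \<alpha>
    using inj[of \<alpha> "h+1"] inj[of "\<alpha>+1" "h+1"] unfolding p
    by (auto simp: algebra_simps)
  have "fz n \<pi> ?x' = (\<Sum>\<alpha> = 0..n - 2. x (\<pi> \<alpha>) * x (\<pi> (\<alpha>+1))
     + (if \<alpha> = h then x (\<pi> h) * (1 - 2 * x p) else 0)
     + (if \<alpha> = h + 1 then (1 - 2 * x p) * x (\<pi> (h+2)) else 0))"
    unfolding fz_def using pt by simp
  also have "\<dots> = fz n \<pi> x + x (\<pi> h) * (1 - 2 * x p)
      + (if h + 1 \<le> n - 2 then (1 - 2 * x p) * x (\<pi> (h+2)) else 0)"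
    unfolding sum.distrib fz_def using h by (simp add: sum.delta)
  finally show ?thesis .
qed

lemma par_fz_flip:
  assumes perm: "\<pi> permutes {0..n-1}" and h: "h + 1 \<le> n - 1" and p: "p = \<pi> (h+1)"
  shows "par (fz n \<pi> (x(p := 1 - x p))) = par (fz n \<pi> x) * par (x (\<pi> h))
      * (if h + 2 \<le> n - 1 then par (x (\<pi> (h+2))) else 1)"
proof -
  have e: "par (a * (1 - 2 * b)) = par a" for a b :: int
  proof -
    have "a * (1 - 2*b) = a + 2 * (- a * b)" by (simp add: algebra_simps)
    then show ?thesis by (simp add: par_add par_def)
  qed
  have e2: "par ((1 - 2 * b) * a) = par a" for a b :: int using e by (simp add: mult.commute)
  show ?thesis
  proof (cases "h + 1 \<le> n - 2")
    case True
    then show ?thesis unfolding fz_flip[OF assms] using h by (simp add: par_add e e2)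
  next
    case False
    then show ?thesis unfolding fz_flip[OF assms] using h by (simp add: par_add e e2 par_0)
  qed
qed

lemma sum_invol_zero:
  fixes G :: "nat \<Rightarrow> int"
  assumes "finite S" "\<And>k. k \<in> S \<Longrightarrow> \<sigma> k \<in> S" "\<And>k. k \<in> S \<Longrightarrow> \<sigma> (\<sigma> k) = k"
    "\<And>k. k \<in> S \<Longrightarrow> G (\<sigma> k) = - G k"
  shows "sum G S = 0"
proof -
  have b: "bij_betw \<sigma> S S"
    by (rule bij_betwI[where g=\<sigma>]) (use assms in auto)
  have "sum G S = sum (G \<circ> \<sigma>) S" using sum.reindex_bij_betw[OF b, of G] by simp
  also have "\<dots> = - sum G S" using assms(4) by (simp add: sum_negf)
  finally show ?thesis by simp
qed

lemma par_bv_prod: "par (bv i a) * par (bv j b) = (if bit i a = bit j b then 1 else -1)"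
  by (auto simp: bv_def par_def)

lemma aux4: "(x::int)*y = -1 \<Longrightarrow> E*E = 1 \<Longrightarrow> 2*(a*x*E*(b*y*E)) = -(2*(a*b))"
proof -
  assume h: "x*y = -1" "E*E = 1"
  have "a*x*E*(b*y*E) = a*b*(x*y)*(E*E)" by (simp add: algebra_simps)
  then show ?thesis using h by simp
qed

lemma golay:
  assumes perm: "\<pi> permutes {0..n-1}" and n: "n \<ge> 2" and t: "1 \<le> t"
  shows "(\<Sum>i<2^n - t. par (fz n \<pi> (bv i)) * par (fz n \<pi> (bv (i+t)))
     + par (fz n \<pi> (bv i) + bv i (\<pi> (n-1))) * par (fz n \<pi> (bv (i+t)) + bv (i+t) (\<pi> (n-1)))) = 0"
proof -
  define v where "v = \<pi> (n-1)"
  define D where "D i = {\<alpha>. \<alpha> < n \<and> bit i (\<pi> \<alpha>) \<noteq> bit (i+t) (\<pi> \<alpha>)}" for i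
  define h where "h i = Max (D i)" for i
  define \<sigma> where "\<sigma> i = (if bit i v = bit (i+t) v then flip_bit (\<pi> (h i + 1)) i else i)" for i
  define T where "T i = par (fz n \<pi> (bv i)) * par (fz n \<pi> (bv (i+t)))
     + par (fz n \<pi> (bv i) + bv i v) * par (fz n \<pi> (bv (i+t)) + bv (i+t) v)" for i
  have T: "T i = par (fz n \<pi> (bv i)) * par (fz n \<pi> (bv (i+t))) * (1 + par (bv i v) * par (bv (i+t) v))" for i
    unfolding T_def par_add by (simp add: algebra_simps)
  have img: "\<alpha> \<le> n - 1 \<Longrightarrow> \<pi> \<alpha> < n" for \<alpha>
    using permutes_in_image[OF perm, of \<alpha>] n by auto
  have surj: "j < n \<Longrightarrow> \<exists>\<alpha>. \<alpha> < n \<and> \<pi> \<alpha> = j" for j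
  proof -
    assume "j < n"
    then have "j \<in> \<pi> ` {0..n-1}" using permutes_image[OF perm] by auto
    then obtain \<alpha> where "\<alpha> \<in> {0..n-1}" "\<pi> \<alpha> = j" by blast
    then show ?thesis using n by (intro exI[of _ \<alpha>]) auto
  qed
  have finD: "finite (D i)" for i unfolding D_def by auto
  have Dne: "D i \<noteq> {}" if i: "i < 2^n - t" for i
  proof
    assume e: "D i = {}"
    have "i = i + t"
    proof (rule bit_eqI)
      fix j
      show "bit i j = bit (i+t) j"
      proof (cases "j < n")
        case True
        then obtain \<alpha> where "\<alpha> < n" "\<pi> \<alpha> = j" using surj by blast
        then show ?thesis using e unfolding D_def by auto
      next
        case False
        have "i < 2^n" "i + t < 2^n" using i by auto
        then show ?thesis using bit_lt[of i n j] bit_lt[of "i+t" n j] False by blast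
      qed
    qed
    then show False using t by simp
  qed
  have key: "\<sigma> i \<in> {..<2^n-t} \<and> \<sigma> (\<sigma> i) = i \<and> T (\<sigma> i) = - T i" if i: "i \<in> {..<2^n-t}" for i
  proof (cases "bit i v = bit (i+t) v")
    case False
    have "T i = 0" unfolding T par_bv_prod using False by simp
    then show ?thesis using False i unfolding \<sigma>_def by simp
  next
    case E: True
    let ?h = "h i"
    have hD: "?h \<in> D i" unfolding h_def using Max_in[OF finD Dne] i by auto
    have hmax: "\<alpha> \<in> D i \<Longrightarrow> \<alpha> \<le> ?h" for \<alpha> unfolding h_def using Max_ge[OF finD] by auto
    have hn: "?h < n" using hD unfolding D_def by auto
    have hn1: "?h \<noteq> n - 1" using hD E unfolding D_def v_def by auto
    define p where "p = \<pi> (?h + 1)"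
    have pn: "p < n" unfolding p_def using hn hn1 img by auto
    have bp: "bit i p = bit (i+t) p"
      using hmax[of "?h+1"] hn hn1 unfolding D_def p_def by force
    have si: "\<sigma> i = flip_bit p i" unfolding \<sigma>_def p_def using E by simp
    have sit: "\<sigma> i + t = flip_bit p (i+t)" unfolding si by (rule flip_add[OF bp])
    have lt: "\<sigma> i + t < 2^n" unfolding sit using i pn flip_lt[of "i+t" n p] by auto
    have DD: "D (\<sigma> i) = D i" unfolding D_def sit unfolding si
      by (auto simp: bit_flip_bit_iff)
    have E2: "bit (\<sigma> i) v = bit (\<sigma> i + t) v" unfolding sit unfolding si using E
      by (auto simp: bit_flip_bit_iff)
    have ss: "\<sigma> (\<sigma> i) = i"
    proof -
      have hh: "h (\<sigma> i) = h i" unfolding h_def DD ..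
      have "\<sigma> (\<sigma> i) = flip_bit p (\<sigma> i)" using \<sigma>_def[of "\<sigma> i"] E2 hh
        by (simp add: p_def)
      also have "\<dots> = i" unfolding si by (rule bit_eqI) (auto simp: bit_flip_bit_iff)
      finally show ?thesis .
    qed
    have h1: "?h + 1 \<le> n - 1" using hn hn1 by auto
    have Ti: "T i = 2 * (par (fz n \<pi> (bv i)) * par (fz n \<pi> (bv (i+t))))"
      unfolding T par_bv_prod using E by simp
    have Tsi: "T (\<sigma> i) = 2 * (par (fz n \<pi> (bv (\<sigma> i))) * par (fz n \<pi> (bv (\<sigma> i + t))))"
      unfolding T par_bv_prod using E2 by simp
    have c1: "par (bv i (\<pi> ?h)) * par (bv (i+t) (\<pi> ?h)) = -1"
      unfolding par_bv_prod using hD unfolding D_def by auto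
    have c2: "(if ?h + 2 \<le> n - 1 then par (bv i (\<pi> (?h+2))) else 1) =
              (if ?h + 2 \<le> n - 1 then par (bv (i+t) (\<pi> (?h+2))) else 1)"
    proof -
      have "?h+2 \<le> n-1 \<Longrightarrow> bit i (\<pi> (?h+2)) = bit (i+t) (\<pi> (?h+2))"
      proof (rule ccontr)
        assume a: "?h+2 \<le> n-1" "bit i (\<pi> (?h+2)) \<noteq> bit (i+t) (\<pi> (?h+2))"
        then have "?h+2 \<in> D i" using n unfolding D_def by auto
        then show False using hmax by fastforce
      qed
      then show ?thesis by (auto simp: bv_def)
    qed
    have c3: "(if ?h + 2 \<le> n - 1 then par (bv i (\<pi> (?h+2))) else 1) *
              (if ?h + 2 \<le> n - 1 then par (bv i (\<pi> (?h+2))) else 1) = 1"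
      by (auto simp: par_sq)
    have f1: "par (fz n \<pi> (bv (\<sigma> i))) = par (fz n \<pi> (bv i)) * par (bv i (\<pi> ?h))
      * (if ?h + 2 \<le> n - 1 then par (bv i (\<pi> (?h+2))) else 1)"
      unfolding si bv_flip by (rule par_fz_flip[OF perm h1 p_def])
    have f2: "par (fz n \<pi> (bv (\<sigma> i + t))) = par (fz n \<pi> (bv (i+t))) * par (bv (i+t) (\<pi> ?h))
      * (if ?h + 2 \<le> n - 1 then par (bv (i+t) (\<pi> (?h+2))) else 1)"
      unfolding sit bv_flip by (rule par_fz_flip[OF perm h1 p_def])
    have "T (\<sigma> i) = - T i"
      unfolding Tsi Ti f1 f2 c2[symmetric]
      by (rule aux4[OF c1 c3])
    then show ?thesis using lt ss by simp
  qed
  have "sum T {..<2^n-t} = 0"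
    by (rule sum_invol_zero[where \<sigma>=\<sigma>]) (use key in auto)
  then show ?thesis unfolding T_def v_def .
qed



definition Asq :: "nat \<Rightarrow> (nat \<Rightarrow> int) \<Rightarrow> (nat \<Rightarrow> int) \<Rightarrow> nat \<Rightarrow> int" where
  "Asq M P Q k = (if k = 0 then 1 else if k \<le> M then P (k-1) else if k \<le> 2*M then Q (2*M - k)
     else if k = 2*M+1 then -1 else 0)"
definition Bsq :: "nat \<Rightarrow> (nat \<Rightarrow> int) \<Rightarrow> (nat \<Rightarrow> int) \<Rightarrow> nat \<Rightarrow> int" where
  "Bsq M P Q k = (if k = 0 then 1 else if k \<le> M then Q (k-1) else if k \<le> 2*M then - P (2*M - k)
     else if k = 2*M+1 then 1 else 0)"
definition IC :: "nat \<Rightarrow> (nat \<Rightarrow> int) \<Rightarrow> (nat \<Rightarrow> int) \<Rightarrow> nat \<Rightarrow> int" where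
  "IC N a b t = (\<Sum>k<N-t. a k * b (k+t))"

lemma zone2:
  fixes P Q :: "nat \<Rightarrow> int"
  assumes s: "s < M" and PQ: "\<And>i. i < s \<Longrightarrow> P i = Q i" and t: "t = 2*M+1-s"
  shows "IC (2*M+2) (Asq M P Q) (Asq M P Q) t + IC (2*M+2) (Bsq M P Q) (Bsq M P Q) t = 0"
    and "IC (2*M+2) (Asq M P Q) (Bsq M P Q) t + IC (2*M+2) (Bsq M P Q) (Asq M P Q) t = 0"
proof -
  have N: "2*M+2-t = s+1" using s t by simp
  have "\<And>k. k < s+1 \<Longrightarrow> Asq M P Q k * Asq M P Q (k+t) + Bsq M P Q k * Bsq M P Q (k+t) = 0
     \<and> Asq M P Q k * Bsq M P Q (k+t) + Bsq M P Q k * Asq M P Q (k+t) = 0"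
  proof -
    fix k assume k: "k < s+1"
    consider "k = 0" "s = 0" | "k = 0" "s > 0" | "k = s" "s > 0" | "0 < k" "k < s" using k by linarith
    then show "?thesis k"
    proof cases
      case 1 then show ?thesis using t by (simp add: Asq_def Bsq_def)
    next
      case 2
      have "\<not> t \<le> M" "t \<le> 2*M" "2*M - t = s - 1" using 2 t s by auto
      then show ?thesis using 2 t s PQ[of "s-1"] by (simp add: Asq_def Bsq_def)
    next
      case 3 then show ?thesis using t s PQ[of "s-1"] by (simp add: Asq_def Bsq_def)
    next
      case 4
      have e: "2*M - (k+t) = s - 1 - k" "\<not> k+t \<le> M" "k+t \<le> 2*M" "k \<le> M" using 4 t s by auto
      show ?thesis using 4 t s PQ[of "s-1-k"] PQ[of "k-1"] e by (simp add: Asq_def Bsq_def)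
    qed
  qed
  note h = this
  show "IC (2*M+2) (Asq M P Q) (Asq M P Q) t + IC (2*M+2) (Bsq M P Q) (Bsq M P Q) t = 0"
    unfolding IC_def N sum.distrib[symmetric] by (rule sum.neutral) (use h in auto)
  show "IC (2*M+2) (Asq M P Q) (Bsq M P Q) t + IC (2*M+2) (Bsq M P Q) (Asq M P Q) t = 0"
    unfolding IC_def N sum.distrib[symmetric] by (rule sum.neutral) (use h in auto)
qed

lemma zone1:
  fixes P Q :: "nat \<Rightarrow> int"
  assumes t1: "1 \<le> t" and tM: "t \<le> M"
    and G: "\<And>t. 1 \<le> t \<Longrightarrow> (\<Sum>i<M-t. P i * P (i+t) + Q i * Q (i+t)) = 0"
  shows "IC (2*M+2) (Asq M P Q) (Asq M P Q) t + IC (2*M+2) (Bsq M P Q) (Bsq M P Q) t = 0"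
proof -
  define F where "F k = Asq M P Q k * Asq M P Q (k+t) + Bsq M P Q k * Bsq M P Q (k+t)" for k
  have IC: "IC (2*M+2) (Asq M P Q) (Asq M P Q) t + IC (2*M+2) (Bsq M P Q) (Bsq M P Q) t
      = sum F {0..<2*M+2-t}"
    unfolding IC_def F_def by (simp add: sum.distrib lessThan_atLeast0)
  have split: "sum F {0..<2*M+2-t} = sum F {0..<1} + sum F {1..<M-t+1} + sum F {M-t+1..<M+1}
     + sum F {M+1..<2*M+1-t} + sum F {2*M+1-t..<2*M+2-t}"
  proof -
    have c: "\<And>a b c. a \<le> b \<Longrightarrow> b \<le> c \<Longrightarrow> sum F {a..<b} + sum F {b..<c} = sum F {a..<c}"
      by (rule sum.atLeastLessThan_concat)
    have "0 \<le> (1::nat)" "1 \<le> M-t+1" "M-t+1 \<le> M+1" "M+1 \<le> 2*M+1-t" "2*M+1-t \<le> 2*M+2-t"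
      using t1 tM by auto
    then show ?thesis
      using c[of 0 1 "M-t+1"] c[of 0 "M-t+1" "M+1"] c[of 0 "M+1" "2*M+1-t"] c[of 0 "2*M+1-t" "2*M+2-t"]
      by linarith
  qed
  have F0: "sum F {0..<1} = P (t-1) + Q (t-1)"
    using t1 tM by (simp add: F_def Asq_def Bsq_def)
  have F4: "sum F {2*M+1-t..<2*M+2-t} = - P (t-1) - Q (t-1)"
  proof -
    have "{2*M+1-t..<2*M+2-t} = {2*M+1-t}" using t1 tM by auto
    moreover have "2*M+1-t+t = 2*M+1" "\<not> 2*M+1-t \<le> M" "2*M+1-t \<noteq> 0" "2*M+1-t \<le> 2*M"
       "2*M - (2*M+1-t) = t-1" using t1 tM by auto
    ultimately show ?thesis by (simp add: F_def Asq_def Bsq_def)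
  qed
  have F1: "sum F {1..<M-t+1} = 0"
  proof -
    have "sum F {1..<M-t+1} = sum (\<lambda>i. F (Suc i)) {0..<M-t}"
      using sum.shift_bounds_Suc_ivl[of F 0 "M-t"] by simp
    also have "\<dots> = (\<Sum>i<M-t. P i * P (i+t) + Q i * Q (i+t))"
      unfolding lessThan_atLeast0
    proof (rule sum.cong)
      fix i assume "i \<in> {0..<M-t}"
      then have "Suc i \<le> M" "Suc i + t \<le> M" by auto
      then show "F (Suc i) = P i * P (i+t) + Q i * Q (i+t)" by (simp add: F_def Asq_def Bsq_def)
    qed simp
    also have "\<dots> = 0" using G[OF t1] .
    finally show ?thesis .
  qed
  have F3: "sum F {M+1..<2*M+1-t} = 0"
  proof -
    have "sum F {M+1..<2*M+1-t} = (\<Sum>i\<in>{0..<M-t}. P i * P (i+t) + Q i * Q (i+t))"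
    proof (rule sum.reindex_bij_witness[where i="\<lambda>i. 2*M-t-i" and j="\<lambda>k. 2*M-t-k"])
      fix k assume k: "k \<in> {M+1..<2*M+1-t}"
      show "2*M-t-(2*M-t-k) = k" using k by auto
      show "2*M-t-k \<in> {0..<M-t}" using k by auto
      have "\<not> k \<le> M" "k \<le> 2*M" "\<not> k+t \<le> M" "k+t \<le> 2*M" "2*M-(k+t) = 2*M-t-k"
        "2*M-k = 2*M-t-k+t" "k \<noteq> 0" using k by auto
      then show "P (2*M-t-k) * P (2*M-t-k+t) + Q (2*M-t-k) * Q (2*M-t-k+t) = F k"
        by (simp add: F_def Asq_def Bsq_def)
    next
      fix i assume i: "i \<in> {0..<M-t}"
      show "2*M-t-(2*M-t-i) = i" using i by auto
      show "2*M-t-i \<in> {M+1..<2*M+1-t}" using i by auto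
    qed
    also have "\<dots> = 0" using G[OF t1] by (simp add: lessThan_atLeast0)
    finally show ?thesis .
  qed
  have F2: "sum F {M-t+1..<M+1} = 0"
  proof (rule sum_invol_zero[where \<sigma>="\<lambda>k. 2*M+1-t-k"])
    fix k assume k: "k \<in> {M-t+1..<M+1}"
    show "2*M+1-t-k \<in> {M-t+1..<M+1}" using k t1 tM by auto
    show "2*M+1-t-(2*M+1-t-k) = k" using k t1 tM by auto
    define k' where "k' = 2*M+1-t-k"
    have A: "k \<noteq> 0" "k \<le> M" "\<not> k+t \<le> M" "k+t \<le> 2*M" "k' \<noteq> 0" "k' \<le> M" "\<not> k'+t \<le> M"
       "k'+t \<le> 2*M" "2*M-(k+t) = k'-1" "2*M-(k'+t) = k-1"
      using k t1 tM unfolding k'_def by auto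
    show "F (2*M+1-t-k) = - F k"
      unfolding k'_def[symmetric] using A by (simp add: F_def Asq_def Bsq_def)
  qed simp
  show ?thesis unfolding IC split F0 F1 F2 F3 F4 by simp
qed



lemma omega_half: "even q \<Longrightarrow> q > 0 \<Longrightarrow> omega q ^ (q div 2) = -1"
proof -
  assume q: "even q" "q > 0"
  have "omega q ^ (q div 2) = exp (of_nat (q div 2) * (2 * pi * \<i> / of_nat q))"
    unfolding omega_def by (rule exp_of_nat_mult[symmetric])
  also have "of_nat (q div 2) * (2 * pi * \<i> / of_nat q) = of_real pi * \<i>"
    using q by (auto elim!: evenE simp: field_simps)
  finally show ?thesis by simp
qed

lemma omega_q: "q > 0 \<Longrightarrow> omega q ^ q = 1"
proof -
  assume q: "q > 0"
  have "omega q ^ q = exp (of_nat q * (2 * pi * \<i> / of_nat q))"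
    unfolding omega_def by (rule exp_of_nat_mult[symmetric])
  also have "of_nat q * (2 * pi * \<i> / of_nat q) = 2 * of_real pi * \<i>"
    using q by (auto simp: field_simps)
  finally show ?thesis by simp
qed

lemma omega_nz: "omega q \<noteq> 0" unfolding omega_def by simp

lemma omega_norm: "norm (omega q) = 1"
proof -
  have "2 * pi * \<i> / of_nat q = \<i> * of_real (2 * pi / q)" by simp
  then show ?thesis unfolding omega_def by (metis norm_exp_i_times)
qed

lemma omega_mod: "q > 0 \<Longrightarrow> omega q powi (z mod int q) = omega q powi z"
proof -
  assume q: "q > 0"
  have "omega q powi (int q * (z div int q) + z mod int q)
      = (omega q powi int q) powi (z div int q) * omega q powi (z mod int q)"
    using power_int_add[of "omega q" "int q * (z div int q)" "z mod int q"] omega_nz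
    by (simp only: power_int_mult) simp
  also have "omega q powi int q = 1" using omega_q[OF q] by simp
  finally show ?thesis by simp
qed

lemma psi_val:
  assumes q: "q > 0" "even q" and K: "K < 2^m"
  shows "Psi q m (\<lambda>x. int (q div 2) * (X x mod 2) + c) K = omega q powi c * of_int (par (X (bit_of K)))"
proof -
  have e: "X (bit_of K) mod 2 = 0 \<or> X (bit_of K) mod 2 = 1" by auto
  have h: "omega q powi (int (q div 2)) = -1" using omega_half[OF q(2) q(1)] by simp
  have "Psi q m (\<lambda>x. int (q div 2) * (X x mod 2) + c) K
     = omega q powi (int (q div 2) * (X (bit_of K) mod 2) + c)"
    unfolding Psi_def using K omega_mod[OF q(1)] by simp
  also have "\<dots> = (omega q powi int (q div 2)) powi (X (bit_of K) mod 2) * omega q powi c"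
    by (simp add: power_int_add omega_nz power_int_mult)
  also have "\<dots> = omega q powi c * of_int (par (X (bit_of K)))"
    unfolding h using e par_mod2[of "X (bit_of K)"] by (auto simp: par_def)
  finally show ?thesis .
qed

lemma bit_of_bv: "bit_of i j = bv i j"
  unfolding bit_of_def bv_def bit_iff_odd by (simp add: odd_iff_mod_2_eq_one)

lemma bv_split: assumes r: "r < 2^n"
  shows "bv (2^n * h + r) j = (if j < n then bv r j else bv h (j - n))"
proof -
  have d: "\<not> bit (push_bit n h) k \<or> \<not> bit r k" for k
    using bit_lt[OF r, of k] by (auto simp: bit_push_bit_iff)
  have "2^n * h + r = push_bit n h + r" by (simp add: push_bit_eq_mult)
  then have "bit (2^n * h + r) j \<longleftrightarrow> bit (push_bit n h) j \<or> bit r j"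
    using bit_disjunctive_add_iff[OF d] by simp
  then show ?thesis using bit_lt[OF r, of j] unfolding bv_def by (auto simp: bit_push_bit_iff)
qed

lemma bv_compl: assumes i: "i < 2^n" and j: "j < n"
  shows "bv (2^n - 1 - i) j = 1 - bv i j"
proof -
  have i2: "int i < 2^n" using i by (metis of_nat_less_iff of_nat_numeral of_nat_power)
  have "not (int i) = (2^n - 1 - int i) + (-1) * 2^n" by (simp add: not_eq_complement)
  then have "not (int i) mod 2^n = (2^n - 1 - int i) mod 2^n" by (metis mod_mult_self1)
  also have "\<dots> = 2^n - 1 - int i" using i2 by (intro mod_pos_pos_trivial) auto
  finally have "int (2^n - 1 - i) = take_bit n (not (int i))"
    using i by (simp add: take_bit_eq_mod of_nat_diff)
  then have "bit (2^n - 1 - i) j \<longleftrightarrow> bit (take_bit n (not (int i))) j"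
    by (metis bit_of_nat_iff_bit)
  also have "\<dots> \<longleftrightarrow> \<not> bit i j" using j by (simp add: bit_take_bit_iff bit_not_iff bit_of_nat_iff_bit)
  finally show ?thesis unfolding bv_def by simp
qed

lemma fz_local:
  assumes perm: "\<pi> permutes {0..n-1}" and n: "n \<ge> 2" and e: "\<And>j. j < n \<Longrightarrow> x j = y j"
  shows "fz n \<pi> x = fz n \<pi> y"
proof -
  have lt: "\<alpha> \<le> n - 1 \<Longrightarrow> \<pi> \<alpha> < n" for \<alpha>
    using permutes_in_image[OF perm, of \<alpha>] n by auto
  show ?thesis unfolding fz_def
  proof (rule sum.cong)
    fix \<alpha> assume a: "\<alpha> \<in> {0..n-2}"
    then show "x (\<pi> \<alpha>) * x (\<pi> (\<alpha> + 1)) = y (\<pi> \<alpha>) * y (\<pi> (\<alpha> + 1))"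
      using lt[of \<alpha>] lt[of "\<alpha>+1"] e n by auto
  qed simp
qed

lemma seq_val:
  fixes q m :: nat and \<pi> :: "nat \<Rightarrow> nat" and c :: int
  assumes q: "q > 0" "even q" and m: "m \<ge> 4" and perm: "\<pi> permutes {0..m - 3}"
    and k: "k < 2^(m-1) + 2" and d: "d = 0 \<or> d = 1"
  defines "n \<equiv> m - 2"
  defines "M \<equiv> (2::nat)^n"
  defines "P \<equiv> \<lambda>i. par (fz n \<pi> (bv i))"
  defines "Q \<equiv> \<lambda>i. par (fz n \<pi> (bv i) + bv i (\<pi> (n-1)))"
  shows "PsiL q m (2^(m-2) - 1) (gfun q m \<pi> c d) k
     = omega q powi c * of_int (if d = 0 then Asq M P Q k else Bsq M P Q k)"
proof -
  have n2: "n \<ge> 2" and m1: "m - 1 = n + 1" and m2: "m - 2 = n" and m3: "m - 3 = n - 1" and m4: "m - 4 = n - 2"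
    using m unfolding n_def by auto
  have Mpos: "M \<ge> 4"
  proof -
    have "(2::nat)^2 \<le> 2^n" using n2 by (rule power_increasing) simp
    then show ?thesis unfolding M_def by simp
  qed
  have n1: "n \<ge> 1" using n2 by simp
  have permn: "\<pi> permutes {0..n-1}" using perm m3 by simp
  have v: "\<pi> (n-1) < n" using permutes_in_image[OF permn, of "n-1"] n2 by auto
  have mn: "m = n + 2" using m unfolding n_def by simp
  have pm: "(2::nat)^m = 4 * M" unfolding M_def mn by (simp add: power_add)
  have pm1: "(2::nat)^(m-1) = 2 * M" unfolding M_def m1 by simp
  define L where "L = M - 1"
  have L: "2^(m-2) - 1 = L" unfolding L_def M_def m2 ..
  define X where "X x = (1 - x (m - 1)) * x (m - 2) * zeta m \<pi> d x + x (m - 1) * (1 - x (m - 2)) * eta m \<pi> d x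
         + (1 - d) * x (m - 1) * x (m - 2)" for x
  have g: "gfun q m \<pi> c d = (\<lambda>x. int (q div 2) * (X x mod 2) + c)"
    unfolding gfun_def X_def ..
  have zeta: "zeta m \<pi> d x = (fz n \<pi> x + d * x (\<pi> (n-1))) mod 2" for x
    unfolding zeta_def fz_def m3 m4 ..
  have eta: "eta m \<pi> d x = (fz n \<pi> (\<lambda>j. 1 - x j) + (1-d) * (1 - x (\<pi> (n-1))) + d) mod 2" for x
    unfolding eta_def fz_def m3 m4 ..
  have Xg: "X (bv (2^n * h + r)) = (1 - bv h 1) * bv h 0 * zeta m \<pi> d (bv r)
      + bv h 1 * (1 - bv h 0) * eta m \<pi> d (bv r) + (1 - d) * bv h 1 * bv h 0" if r: "r < 2^n" for h r
  proof -
    have loc: "\<And>j. j < n \<Longrightarrow> bv (2^n * h + r) j = bv r j" using bv_split[OF r] by simp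
    have z: "zeta m \<pi> d (bv (2^n * h + r)) = zeta m \<pi> d (bv r)"
      unfolding zeta using fz_local[OF permn n2 loc] loc[OF v] by simp
    have e: "eta m \<pi> d (bv (2^n * h + r)) = eta m \<pi> d (bv r)"
      unfolding eta using fz_local[OF permn n2, of "\<lambda>j. 1 - bv (2^n * h + r) j" "\<lambda>j. 1 - bv r j"] loc loc[OF v] by simp
    show ?thesis unfolding X_def m1 m2 z e using bv_split[OF r] by simp
  qed
  have kN: "k < 2*M + 2" using k pm1 by simp
  have PsiL: "PsiL q m (2^(m-2) - 1) (gfun q m \<pi> c d) k = omega q powi c * of_int (par (X (bv (k + L))))"
  proof -
    have "k < 2^m - 2*L" "k + L < 2^m" using kN pm Mpos unfolding L_def by auto
    then show ?thesis unfolding PsiL_def L g using psi_val[OF q, of "k+L" m X c]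
      by (simp add: bit_of_bv[abs_def])
  qed
  have b0: "bv 0 j = 0" "bv 1 0 = 1" "bv 1 1 = 0" "bv 2 0 = 0" "bv 2 1 = 1" "bv 3 0 = 1" "bv 3 1 = 1" for j
    by (simp_all add: bv_def bit_iff_odd)
  have M2: "M = 2^n" unfolding M_def ..
  consider "k = 0" | "1 \<le> k" "k \<le> M" | "M + 1 \<le> k" "k \<le> 2*M" | "k = 2*M+1" using kN by linarith
  then show ?thesis
  proof cases
    case 1
    have "k + L = 2^n * 0 + (M - 1)" using 1 unfolding L_def by simp
    moreover have "M - 1 < 2^n" using Mpos unfolding M_def by simp
    ultimately show ?thesis unfolding PsiL using 1 Xg[of "M-1" 0] b0 by (simp add: Asq_def Bsq_def par_0)
  next
    case 2
    have K: "k + L = 2^n * 1 + (k - 1)" using 2 unfolding L_def M_def by simp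
    have r: "k - 1 < 2^n" using 2 unfolding M_def by simp
    show ?thesis unfolding PsiL K Xg[OF r] using 2 d b0 Mpos
      by (auto simp: Asq_def Bsq_def zeta par_mod2 P_def Q_def)
  next
    case 3
    define i where "i = 2*M - k"
    have i: "i < 2^n" using 3 unfolding i_def M_def by simp
    have K: "k + L = 2^n * 2 + (2^n - 1 - i)" using 3 Mpos unfolding i_def L_def M_def by simp
    have r: "2^n - 1 - i < 2^n" using Mpos unfolding M_def by simp
    have cp: "\<And>j. j < n \<Longrightarrow> 1 - bv (2^n - 1 - i) j = bv i j" using bv_compl[OF i] by simp
    have fzc: "fz n \<pi> (\<lambda>j. 1 - bv (2^n - 1 - i) j) = fz n \<pi> (bv i)"
      using fz_local[OF permn n2 cp] by simp
    have e: "eta m \<pi> d (bv (2^n - 1 - i)) = (fz n \<pi> (bv i) + (1-d) * bv i (\<pi> (n-1)) + d) mod 2"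
      unfolding eta fzc cp[OF v] ..
    have kk: "\<not> k \<le> M" "k \<le> 2*M" "k \<noteq> 0" using 3 Mpos by auto
    show ?thesis unfolding PsiL K Xg[OF r] e using d b0 kk
      by (auto simp: Asq_def Bsq_def par_mod2 P_def Q_def i_def par_add par_1 par_0)
  next
    case 4
    have K: "k + L = 2^n * 3 + 0" using 4 Mpos unfolding L_def M_def by simp
    have r: "(0::nat) < 2^n" by simp
    have kk: "\<not> k \<le> M" "\<not> k \<le> 2*M" "k \<noteq> 0" using 4 Mpos by auto
    show ?thesis unfolding PsiL K Xg[OF r] using d b0 kk 4
      by (auto simp: Asq_def Bsq_def par_1 par_0)
  qed
qed

lemma acorr_link:
  assumes a: "\<forall>k<N. a k = w * of_int (A k)" and b: "\<forall>k<N. b k = w * of_int (B k)"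
    and w: "norm w = 1" and t: "nat \<bar>\<tau>\<bar> < N"
  shows "acorr N a b \<tau> = of_int (if \<tau> \<ge> 0 then IC N A B (nat \<tau>) else IC N B A (nat (-\<tau>)))"
proof -
  have ww: "w * cnj w = 1" using complex_norm_square[of w] w by simp
  have pr: "(w * of_int x) * cnj (w * of_int y) = of_int (x * y)" for x y
  proof -
    have "(w * of_int x) * cnj (w * of_int y) = (w * cnj w) * of_int (x * y)" by simp
    then show ?thesis using ww by simp
  qed
  have nt: "\<not> \<bar>\<tau>\<bar> \<ge> int N" using t by linarith
  show ?thesis
  proof (cases "\<tau> \<ge> 0")
    case True
    have "acorr N a b \<tau> = (\<Sum>k = 0..<N - nat \<tau>. a k * cnj (b (k + nat \<tau>)))"
      unfolding acorr_def using nt True by simp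
    also have "\<dots> = (\<Sum>k = 0..<N - nat \<tau>. of_int (A k * B (k + nat \<tau>)))"
      by (rule sum.cong) (use a b pr in auto)
    finally show ?thesis using True unfolding IC_def by (simp add: lessThan_atLeast0)
  next
    case False
    have "acorr N a b \<tau> = (\<Sum>k = 0..<N - nat (-\<tau>). a (k + nat (-\<tau>)) * cnj (b k))"
      unfolding acorr_def using nt False by simp
    also have "\<dots> = (\<Sum>k = 0..<N - nat (-\<tau>). of_int (B k * A (k + nat (-\<tau>))))"
      by (rule sum.cong) (use a b pr in \<open>auto simp: mult.commute\<close>)
    finally show ?thesis using False unfolding IC_def by (simp add: lessThan_atLeast0)
  qed
qed

theorem theorem1:
  fixes q m :: nat and \<pi> :: "nat \<Rightarrow> nat" and c :: int
  assumes "q \<ge> 2" and "even q" and "m \<ge> 4"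
    and "\<pi> permutes {0..m - 3}"
  shows "CZCP (2 ^ (m - 1) + 2) (2 ^ \<pi> (m - 3) + 1)
           (PsiL q m (2 ^ (m - 2) - 1) (gfun q m \<pi> c 0))
           (PsiL q m (2 ^ (m - 2) - 1) (gfun q m \<pi> c 1))"
proof -
  define n where "n = m - 2"
  define M where "M = (2::nat)^n"
  define P where "P = (\<lambda>i. par (fz n \<pi> (bv i)))"
  define Q where "Q = (\<lambda>i. par (fz n \<pi> (bv i) + bv i (\<pi> (n-1))))"
  define a where "a = PsiL q m (2 ^ (m - 2) - 1) (gfun q m \<pi> c 0)"
  define b where "b = PsiL q m (2 ^ (m - 2) - 1) (gfun q m \<pi> c 1)"
  define w where "w = omega q powi c"
  define N where "N = 2 ^ (m - 1) + (2::nat)"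
  define v where "v = \<pi> (n - 1)"
  have q0: "q > 0" using assms(1) by simp
  have n2: "n \<ge> 2" and m3: "m - 3 = n - 1" and mn: "m - 1 = n + 1" using assms(3) unfolding n_def by auto
  have permn: "\<pi> permutes {0..n-1}" using assms(4) m3 by simp
  have NM: "N = 2*M + 2" unfolding N_def M_def mn by simp
  have wn: "norm w = 1" unfolding w_def by (simp add: norm_power_int omega_norm)
  have av: "\<forall>k<N. a k = w * of_int (Asq M P Q k)"
    using seq_val[OF q0 assms(2) assms(3) assms(4), of _ 0 c] unfolding a_def w_def N_def M_def P_def Q_def n_def
    by simp
  have bv': "\<forall>k<N. b k = w * of_int (Bsq M P Q k)"
    using seq_val[OF q0 assms(2) assms(3) assms(4), of _ 1 c] unfolding b_def w_def N_def M_def P_def Q_def n_def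
    by simp
  have vn: "v \<le> n - 1" unfolding v_def using permutes_in_image[OF permn, of "n-1"] n2 by auto
  have Zv: "2 ^ \<pi> (m - 3) + 1 = 2^v + (1::nat)" unfolding v_def m3 ..
  have pv: "(2::nat)^v \<le> 2^(n-1)" using vn by (rule power_increasing) simp
  have pn: "(2::nat)^n = 2 * 2^(n-1)" using n2 by (metis Suc_diff_1 power_Suc less_le_trans pos2 zero_less_numeral le_less)
  have pn1: "(2::nat)^(n-1) \<ge> 1" by simp
  have ZM: "2^v + 1 \<le> M" unfolding M_def using pv pn pn1 by linarith
  have ZM2: "2^v < M" unfolding M_def using pv pn pn1 by linarith
  have golay': "\<And>t. 1 \<le> t \<Longrightarrow> (\<Sum>i<M-t. P i * P (i+t) + Q i * Q (i+t)) = 0"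
    unfolding P_def Q_def M_def using golay[OF permn n2] by simp
  have PQ: "P i = Q i" if "i < 2^v" for i
  proof -
    have "\<not> bit i v" using bit_lt[OF that] by auto
    then show ?thesis unfolding P_def Q_def v_def[symmetric] by (simp add: bv_def)
  qed
  have eqAA: "acorr N a a \<tau> + acorr N b b \<tau> = of_int (IC N (Asq M P Q) (Asq M P Q) (nat \<bar>\<tau>\<bar>)
      + IC N (Bsq M P Q) (Bsq M P Q) (nat \<bar>\<tau>\<bar>))" if "nat \<bar>\<tau>\<bar> < N" for \<tau>
    using acorr_link[OF av av wn that] acorr_link[OF bv' bv' wn that] by (cases "\<tau> \<ge> 0") auto
  have eqAB: "acorr N a b \<tau> + acorr N b a \<tau> = of_int (IC N (Asq M P Q) (Bsq M P Q) (nat \<bar>\<tau>\<bar>)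
      + IC N (Bsq M P Q) (Asq M P Q) (nat \<bar>\<tau>\<bar>))" if "nat \<bar>\<tau>\<bar> < N" for \<tau>
    using acorr_link[OF av bv' wn that] acorr_link[OF bv' av wn that] by (cases "\<tau> \<ge> 0") auto
  have z2: "IC N (Asq M P Q) (Asq M P Q) t + IC N (Bsq M P Q) (Bsq M P Q) t = 0 \<and>
            IC N (Asq M P Q) (Bsq M P Q) t + IC N (Bsq M P Q) (Asq M P Q) t = 0"
    if "t \<in> {N - (2^v+1)..N - 1}" for t
  proof -
    define s where "s = N - 1 - t"
    have s: "s < M" "t = 2*M+1-s" "s \<le> 2^v" using that ZM unfolding s_def NM by auto
    have pq: "\<And>i. i < s \<Longrightarrow> P i = Q i" using PQ s(3) by simp
    show ?thesis unfolding NM using zone2[OF s(1) pq s(2)] by simp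
  qed
  show ?thesis
    unfolding CZCP_def a_def[symmetric] b_def[symmetric] N_def[symmetric] Zv
  proof (intro conjI allI impI)
    fix \<tau> :: int
    assume h: "nat \<bar>\<tau>\<bar> \<in> {1..2^v+1} \<union> {N - (2^v+1)..N - 1}"
    have lt: "nat \<bar>\<tau>\<bar> < N" using h ZM unfolding NM by auto
    show "acorr N a a \<tau> + acorr N b b \<tau> = 0"
    proof (cases "nat \<bar>\<tau>\<bar> \<in> {1..2^v+1}")
      case True
      then have "1 \<le> nat \<bar>\<tau>\<bar>" "nat \<bar>\<tau>\<bar> \<le> M" using ZM by auto
      from zone1[OF this golay']
      have "IC N (Asq M P Q) (Asq M P Q) (nat \<bar>\<tau>\<bar>) + IC N (Bsq M P Q) (Bsq M P Q) (nat \<bar>\<tau>\<bar>) = 0"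
        unfolding NM .
      then show ?thesis unfolding eqAA[OF lt] by simp
    next
      case False
      then have "nat \<bar>\<tau>\<bar> \<in> {N - (2^v+1)..N - 1}" using h by blast
      from z2[OF this] show ?thesis unfolding eqAA[OF lt] by simp
    qed
  next
    fix \<tau> :: int
    assume h: "nat \<bar>\<tau>\<bar> \<in> {N - (2^v+1)..N - 1}"
    have lt: "nat \<bar>\<tau>\<bar> < N" using h unfolding NM by auto
    show "acorr N a b \<tau> + acorr N b a \<tau> = 0" using z2[OF h] unfolding eqAB[OF lt] by simp
  qed
qed


end
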